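(* Let $m\ge 3$ and let $G=\mathrm{Sp}_{2m}(2)$ act in one of its two $2$-transitive actions (on the set of quadratic forms of $+$ type, respectively of $-$ type, on $\mathbb{F}_2^{2m}$ whose associated bilinear form is the defining symplectic form; degrees $2^{2m-1}+2^{m-1}$ and $2^{2m-1}-2^{m-1}$). Then for any two distinct points $\omega,\omega'$, the setwise stabilizer of $\{\omega,\omega'\}$ splits as a direct product $G(\{\omega,\omega'\}) = G(\omega,\omega')\times\langle s\rangle$, where $s$ is an involution swapping $\omega$ and $\omega'$. Consequently, there is no proper extension of this action to a $2$-by-block-transitive action of $G$.
   Context: A proper extension to a $2$-by-block-transitive action is a $G$-set $\Omega$ with a $G$-equivariant surjection onto the given $G$-set whose fibres (blocks) have size at least $2$, such that $G$ is transitive on ordered pairs of points of $\Omega$ in distinct blocks. *)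

theory Defs
  imports Main
begin

text \<open>Vectors of F_2^(2m) are encoded as subsets of {..<2m} (characteristic
  vectors); vector addition is symmetric difference.\<close>

definition vecs :: "nat \<Rightarrow> nat set set" where
  "vecs m = {v. v \<subseteq> {..<2*m}}"

definition vadd :: "nat set \<Rightarrow> nat set \<Rightarrow> nat set" where
  "vadd u v = (u - v) \<union> (v - u)"

definition symp :: "nat \<Rightarrow> nat set \<Rightarrow> nat set \<Rightarrow> bool" where
  "symp m u v = odd (card {i. i < m \<and> 2*i \<in> u \<and> 2*i+1 \<in> v}
                   + card {i. i < m \<and> 2*i+1 \<in> u \<and> 2*i \<in> v})"

definition Sp :: "nat \<Rightarrow> (nat set \<Rightarrow> nat set) set" where
  "Sp m = {g. bij_betw g (vecs m) (vecs m) \<and> (\<forall>x. x \<notin> vecs m \<longrightarrow> g x = x)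
            \<and> (\<forall>u\<in>vecs m. \<forall>v\<in>vecs m. g (vadd u v) = vadd (g u) (g v))
            \<and> (\<forall>u\<in>vecs m. \<forall>v\<in>vecs m. symp m (g u) (g v) = symp m u v)}"

text \<open>Quadratic forms on F_2^(2m) whose polarisation is the symplectic form
  (values True = 1, False = 0; set to False outside the vector space).\<close>
definition qforms :: "nat \<Rightarrow> (nat set \<Rightarrow> bool) set" where
  "qforms m = {Q. (\<forall>v. v \<notin> vecs m \<longrightarrow> \<not> Q v)
      \<and> (\<forall>u\<in>vecs m. \<forall>v\<in>vecs m. Q (vadd u v) = ((Q u \<noteq> Q v) \<noteq> symp m u v))}"

definition is_subspace :: "nat \<Rightarrow> nat set set \<Rightarrow> bool" where
  "is_subspace m W \<longleftrightarrow> W \<subseteq> vecs m \<and> {} \<in> W \<and> (\<forall>u\<in>W. \<forall>v\<in>W. vadd u v \<in> W)"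

text \<open>Plus type: Witt index m, i.e. a totally singular subspace of dimension m
  (2^m elements). Minus type: the remaining (nondegenerate) forms.\<close>
definition plus_type :: "nat \<Rightarrow> (nat set \<Rightarrow> bool) \<Rightarrow> bool" where
  "plus_type m Q \<longleftrightarrow> (\<exists>W. is_subspace m W \<and> card W = 2^m \<and> (\<forall>w\<in>W. \<not> Q w))"

definition qforms_type :: "nat \<Rightarrow> bool \<Rightarrow> (nat set \<Rightarrow> bool) set" where
  "qforms_type m eps = {Q \<in> qforms m. plus_type m Q = eps}"

definition qact :: "(nat set \<Rightarrow> nat set) \<Rightarrow> (nat set \<Rightarrow> bool) \<Rightarrow> (nat set \<Rightarrow> bool)" where
  "qact g Q = Q \<circ> inv g"

text \<open>Proper extension of the G-set (X, xact) to a 2-by-block-transitive action: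
  G is a group of permutations (composition), (Omega, act) a G-set, pi an equivariant
  surjection onto X with blocks of size at least 2, and G transitive on ordered pairs
  of points of Omega lying in distinct blocks.\<close>
definition proper_2bbt_extension ::
  "('v \<Rightarrow> 'v) set \<Rightarrow> (('v \<Rightarrow> 'v) \<Rightarrow> 'x \<Rightarrow> 'x) \<Rightarrow> 'x set
   \<Rightarrow> (('v \<Rightarrow> 'v) \<Rightarrow> 'b \<Rightarrow> 'b) \<Rightarrow> 'b set \<Rightarrow> ('b \<Rightarrow> 'x) \<Rightarrow> bool" where
  "proper_2bbt_extension G xact X act \<Omega> \<pi> \<longleftrightarrow>
     (\<forall>g\<in>G. \<forall>w\<in>\<Omega>. act g w \<in> \<Omega>)
   \<and> (\<forall>w\<in>\<Omega>. act id w = w)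
   \<and> (\<forall>g\<in>G. \<forall>h\<in>G. \<forall>w\<in>\<Omega>. act (g \<circ> h) w = act g (act h w))
   \<and> \<pi> ` \<Omega> = X
   \<and> (\<forall>g\<in>G. \<forall>w\<in>\<Omega>. \<pi> (act g w) = xact g (\<pi> w))
   \<and> (\<forall>x\<in>X. \<exists>a\<in>\<Omega>. \<exists>b\<in>\<Omega>. a \<noteq> b \<and> \<pi> a = x \<and> \<pi> b = x)
   \<and> (\<forall>a\<in>\<Omega>. \<forall>b\<in>\<Omega>. \<forall>c\<in>\<Omega>. \<forall>d\<in>\<Omega>. \<pi> a \<noteq> \<pi> b \<longrightarrow> \<pi> c \<noteq> \<pi> d \<longrightarrow>
        (\<exists>g\<in>G. act g a = c \<and> act g b = d))"

end

theory Submission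
  imports Defs
begin

lemma vadd_comm: "vadd u v = vadd v u" unfolding vadd_def by blast
lemma vadd_assoc: "vadd (vadd u v) w = vadd u (vadd v w)" unfolding vadd_def by blast
lemma vadd_self[simp]: "vadd u u = {}" unfolding vadd_def by blast
lemma vadd_empty[simp]: "vadd u {} = u" "vadd {} u = u" unfolding vadd_def by blast+
lemma vadd_cancel[simp]: "vadd u (vadd u v) = v" "vadd (vadd v u) u = v" unfolding vadd_def by blast+
lemma vadd_insert: "x \<notin> v \<Longrightarrow> insert x v = vadd {x} v" unfolding vadd_def by blast

lemma par_aux: "(c::nat) = x + y \<Longrightarrow> a = x + z \<Longrightarrow> b = y + z \<Longrightarrow> odd c = (odd a \<noteq> odd b)"
  by presburger

lemma par_vadd:
  assumes "finite A" "finite B"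
  shows "odd (card (vadd A B)) = (odd (card A) \<noteq> odd (card B))"
proof -
  have "vadd A B = (A - B) \<union> (B - A)" unfolding vadd_def by simp
  moreover have "(A - B) \<inter> (B - A) = {}" by blast
  ultimately have "card (vadd A B) = card (A - B) + card (B - A)"
    using assms by (simp add: card_Un_disjoint)
  moreover have "card A = card (A - B) + card (A \<inter> B)"
  proof -
    have "A = (A - B) \<union> (A \<inter> B)" by blast
    moreover have "(A - B) \<inter> (A \<inter> B) = {}" by blast
    ultimately show ?thesis using assms card_Un_disjoint
      by (metis finite_Diff finite_Int)
  qed
  moreover have "card B = card (B - A) + card (A \<inter> B)"
  proof -
    have "B = (B - A) \<union> (A \<inter> B)" by blast
    moreover have "(B - A) \<inter> (A \<inter> B) = {}" by blast
    ultimately show ?thesis using assms card_Un_disjoint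
      by (metis finite_Diff finite_Int)
  qed
  ultimately show ?thesis using par_aux by metis
qed

lemma vecs_finite: "v \<in> vecs m \<Longrightarrow> finite v"
  unfolding vecs_def using finite_subset by blast
lemma vecs_vadd: "u \<in> vecs m \<Longrightarrow> v \<in> vecs m \<Longrightarrow> vadd u v \<in> vecs m"
  unfolding vecs_def vadd_def by blast
lemma finite_vecs: "finite (vecs m)"
  unfolding vecs_def by simp
lemma card_vecs: "card (vecs m) = 4 ^ m"
proof -
  have "vecs m = Pow {..<2*m}" unfolding vecs_def by auto
  thus ?thesis by (simp add: card_Pow power_mult)
qed

definition bf :: "nat set \<Rightarrow> nat set \<Rightarrow> bool" where
  "bf u v = odd (card {i. 2*i \<in> u \<and> 2*i+1 \<in> v} + card {i. 2*i+1 \<in> u \<and> 2*i \<in> v})"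

definition pp :: "nat \<Rightarrow> nat" where "pp j = (if even j then Suc j else j - 1)"

lemma pp_pp[simp]: "pp (pp j) = j" unfolding pp_def by auto
lemma pp_less: "j < 2*m \<Longrightarrow> pp j < 2*m" unfolding pp_def by auto

lemma fin_half1: "finite (u::nat set) \<Longrightarrow> finite {i. 2*i \<in> u \<and> P i}"
  by (rule finite_subset[of _ "(\<lambda>x. x div 2) ` u"]) (auto intro: image_eqI[where x="2*_"])
lemma fin_half2: "finite (u::nat set) \<Longrightarrow> finite {i. 2*i+1 \<in> u \<and> P i}"
  by (rule finite_subset[of _ "(\<lambda>x. x div 2) ` u"]) (auto intro: image_eqI[where x="2*_+1"])

lemma symp_bf: "u \<in> vecs m \<Longrightarrow> symp m u v = bf u v"
proof -
  assume u: "u \<in> vecs m"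
  have "{i. i < m \<and> 2*i \<in> u \<and> 2*i+1 \<in> v} = {i. 2*i \<in> u \<and> 2*i+1 \<in> v}"
    using u unfolding vecs_def by auto
  moreover have "{i. i < m \<and> 2*i+1 \<in> u \<and> 2*i \<in> v} = {i. 2*i+1 \<in> u \<and> 2*i \<in> v}"
    using u unfolding vecs_def by auto
  ultimately show ?thesis unfolding symp_def bf_def by simp
qed

lemma bf_sym: "bf u v = bf v u"
proof -
  have "{i. 2*i \<in> u \<and> 2*i+1 \<in> v} = {i. 2*i+1 \<in> v \<and> 2*i \<in> u}" by blast
  moreover have "{i. 2*i+1 \<in> u \<and> 2*i \<in> v} = {i. 2*i \<in> v \<and> 2*i+1 \<in> u}" by blast
  ultimately show ?thesis unfolding bf_def by (simp add: add.commute)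
qed
lemma bf_self[simp]: "bf u u = False"
proof -
  have "{i. 2*i \<in> u \<and> 2*i+1 \<in> u} = {i. 2*i+1 \<in> u \<and> 2*i \<in> u}" by blast
  thus ?thesis unfolding bf_def by simp
qed

lemma bf_add1:
  assumes "finite u" "finite v"
  shows "bf (vadd u v) w = (bf u w \<noteq> bf v w)"
proof -
  have 1: "{i. 2*i \<in> vadd u v \<and> 2*i+1 \<in> w} = vadd {i. 2*i \<in> u \<and> 2*i+1 \<in> w} {i. 2*i \<in> v \<and> 2*i+1 \<in> w}"
    unfolding vadd_def by auto
  have 2: "{i. 2*i+1 \<in> vadd u v \<and> 2*i \<in> w} = vadd {i. 2*i+1 \<in> u \<and> 2*i \<in> w} {i. 2*i+1 \<in> v \<and> 2*i \<in> w}"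
    unfolding vadd_def by auto
  have f1: "finite {i. 2*i \<in> u \<and> 2*i+1 \<in> w}" "finite {i. 2*i \<in> v \<and> 2*i+1 \<in> w}"
    by (rule fin_half1, rule assms)+
  have f2: "finite {i. 2*i+1 \<in> u \<and> 2*i \<in> w}" "finite {i. 2*i+1 \<in> v \<and> 2*i \<in> w}"
    by (rule fin_half2, rule assms)+
  show ?thesis unfolding bf_def 1 2 odd_add par_vadd[OF f1] par_vadd[OF f2] by auto
qed

lemma bf_add2: "finite u \<Longrightarrow> finite v \<Longrightarrow> bf w (vadd u v) = (bf w u \<noteq> bf w v)"
  using bf_add1 bf_sym by metis

lemma bf_empty[simp]: "bf {} v = False" "bf v {} = False" unfolding bf_def by simp_all

lemma bf_single: "bf u {x} = (pp x \<in> u)"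
proof (cases "even x")
  case True
  then obtain k where k: "x = 2*k" by blast
  have a: "{i. 2*i \<in> u \<and> 2*i+1 \<in> {x}} = {}" using k by auto presburger
  have b: "{i. 2*i+1 \<in> u \<and> 2*i \<in> {x}} = (if x+1 \<in> u then {k} else {})" using k by auto
  show ?thesis unfolding bf_def a b pp_def using True by auto
next
  case False
  then obtain k where k: "x = 2*k+1" using oddE by blast
  have a: "{i. 2*i \<in> u \<and> 2*i+1 \<in> {x}} = (if 2*k \<in> u then {k} else {})" using k by auto
  have b: "{i. 2*i+1 \<in> u \<and> 2*i \<in> {x}} = {}" using k by auto presburger
  show ?thesis unfolding bf_def a b pp_def using False k by auto
qed

definition pairs :: "nat set \<Rightarrow> nat set" where
  "pairs v = {i. 2*i \<in> v \<and> 2*i+1 \<in> v}"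

definition PQ :: "(nat \<Rightarrow> bool) \<Rightarrow> nat set \<Rightarrow> bool" where
  "PQ c v = odd (card {j\<in>v. c j} + card (pairs v))"

lemma PQ_add:
  assumes u: "finite u" and v: "finite v"
  shows "PQ c (vadd u v) = ((PQ c u \<noteq> PQ c v) \<noteq> bf u v)"
proof -
  have 1: "{j\<in>vadd u v. c j} = vadd {j\<in>u. c j} {j\<in>v. c j}" unfolding vadd_def by auto
  have 2: "pairs (vadd u v) = vadd (vadd (pairs u) (pairs v))
      (vadd {i. 2*i \<in> u \<and> 2*i+1 \<in> v} {i. 2*i+1 \<in> u \<and> 2*i \<in> v})"
    unfolding vadd_def pairs_def by auto
  have f1: "finite {j\<in>u. c j}" "finite {j\<in>v. c j}" using u v by auto
  have f2: "finite (pairs u)" "finite (pairs v)" unfolding pairs_def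
    by (rule fin_half1, rule assms)+
  have f3: "finite {i. 2*i \<in> u \<and> 2*i+1 \<in> v}" by (rule fin_half1, rule assms)
  have f4: "finite {i. 2*i+1 \<in> u \<and> 2*i \<in> v}" by (rule fin_half2, rule assms)
  have f5: "finite (vadd (pairs u) (pairs v))" using f2 unfolding vadd_def by auto
  have f6: "finite (vadd {i. 2*i \<in> u \<and> 2*i+1 \<in> v} {i. 2*i+1 \<in> u \<and> 2*i \<in> v})"
    using f3 f4 unfolding vadd_def by auto
  show ?thesis unfolding PQ_def bf_def 1 2 odd_add par_vadd[OF f1] par_vadd[OF f5 f6]
      par_vadd[OF f2] par_vadd[OF f3 f4] by auto
qed

lemma PQ_empty[simp]: "PQ c {} = False" unfolding PQ_def pairs_def by simp

lemma PQ_single: "PQ c {x} = c x"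
proof -
  have "pairs {x} = {}" unfolding pairs_def by auto
  moreover have "{j\<in>{x}. c j} = (if c x then {x} else {})" by auto
  ultimately show ?thesis unfolding PQ_def by auto
qed

lemma PQ_insert:
  assumes "finite v" "x \<notin> v"
  shows "PQ c (insert x v) = ((c x \<noteq> PQ c v) \<noteq> (pp x \<in> v))"
proof -
  have "PQ c (insert x v) = ((PQ c {x} \<noteq> PQ c v) \<noteq> bf {x} v)"
    unfolding vadd_insert[OF assms(2)] by (rule PQ_add) (use assms in auto)
  thus ?thesis by (simp add: PQ_single bf_sym[of "{x}"] bf_single)
qed

lemma qform_empty: "Q \<in> qforms m \<Longrightarrow> Q {} = False"
proof -
  assume "Q \<in> qforms m"
  hence "Q (vadd {} {}) = ((Q {} \<noteq> Q {}) \<noteq> symp m {} {})"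
    unfolding qforms_def vecs_def by blast
  moreover have "symp m {} {} = False" unfolding symp_def by simp
  ultimately show ?thesis by simp
qed

lemma qform_add: "Q \<in> qforms m \<Longrightarrow> u \<in> vecs m \<Longrightarrow> v \<in> vecs m \<Longrightarrow>
   Q (vadd u v) = ((Q u \<noteq> Q v) \<noteq> bf u v)"
  unfolding qforms_def using symp_bf by auto

lemma qform_PQ:
  assumes Q: "Q \<in> qforms m" and v: "v \<in> vecs m"
  shows "Q v = PQ (\<lambda>j. Q {j}) v"
proof -
  have "finite v" "v \<subseteq> {..<2*m}" using v unfolding vecs_def by (auto intro: finite_subset)
  thus ?thesis
  proof (induction v rule: finite_induct)
    case empty
    then show ?case using qform_empty[OF Q] by simp
  next
    case (insert x F)
    have x: "{x} \<in> vecs m" and F: "F \<in> vecs m" using insert unfolding vecs_def by auto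
    have "Q (insert x F) = ((Q {x} \<noteq> Q F) \<noteq> bf {x} F)"
      unfolding vadd_insert[OF insert(2)] by (rule qform_add[OF Q x F])
    moreover have "PQ (\<lambda>j. Q {j}) (insert x F) = ((Q {x} \<noteq> PQ (\<lambda>j. Q {j}) F) \<noteq> (pp x \<in> F))"
      by (rule PQ_insert) (use insert in auto)
    ultimately show ?case using insert by (simp add: bf_sym[of "{x}"] bf_single)
  qed
qed

definition chi :: "bool \<Rightarrow> int" where "chi b = (if b then -1 else 1)"

lemma chi_neq: "chi (a \<noteq> b) = chi a * chi b" unfolding chi_def by auto
lemma chi_not: "chi (\<not> a) = - chi a" unfolding chi_def by auto

definition arf :: "nat \<Rightarrow> (nat \<Rightarrow> bool) \<Rightarrow> nat" where
  "arf m c = card {i. i < m \<and> c (2*i) \<and> c (2*i+1)}"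

lemma arf_Suc: "arf (Suc m) c = arf m c + (if c (2*m) \<and> c (2*m+1) then 1 else 0)"
proof -
  have "{i. i < Suc m \<and> c (2*i) \<and> c (2*i+1)} =
     {i. i < m \<and> c (2*i) \<and> c (2*i+1)} \<union> (if c (2*m) \<and> c (2*m+1) then {m} else {})"
    by (auto simp: less_Suc_eq)
  thus ?thesis unfolding arf_def by auto
qed

lemma sum_Pow_insert:
  fixes f :: "nat set \<Rightarrow> int"
  assumes "finite B" "x \<notin> B"
  shows "sum f (Pow (insert x B)) = sum f (Pow B) + sum (\<lambda>v. f (insert x v)) (Pow B)"
proof -
  have "Pow (insert x B) = Pow B \<union> insert x ` Pow B" by (rule Pow_insert)
  moreover have "Pow B \<inter> insert x ` Pow B = {}" using assms by auto
  moreover have "inj_on (insert x) (Pow B)" using assms unfolding inj_on_def by (metis PowD Diff_insert_absorb subsetD)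
  ultimately show ?thesis using assms by (simp add: sum.union_disjoint sum.reindex)
qed

lemma aux_ring: "(X::int) = Y + a*S + b*S + (-b*a)*S \<Longrightarrow> Y = S \<Longrightarrow> X = S*(1+a+b-b*a)"
  by (simp add: algebra_simps)

lemma aux_sign: "(if even (k::nat) then 1 else -1) * (2::int)^m * (1 + chi a + chi b - chi b * chi a) =
   (if even (k + (if a \<and> b then 1 else 0)) then 1 else -1) * 2^Suc m"
  by (cases a; cases b) (cases "even k"; simp add: chi_def)+

lemma S_formula:
  "(\<Sum>v\<in>vecs m. chi (PQ c v)) = (if even (arf m c) then 1 else -1) * 2 ^ m"
proof (induction m)
  case 0
  have "vecs 0 = {{}}" unfolding vecs_def by auto
  then show ?case unfolding arf_def chi_def by simp
next
  case (Suc m)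
  let ?A = "{..<2*m}"
  let ?S = "\<Sum>v\<in>vecs m. chi (PQ c v)"
  have vs: "vecs (Suc m) = Pow (insert (2*m+1) (insert (2*m) ?A))"
    unfolding vecs_def by auto
  have vm: "vecs m = Pow ?A" unfolding vecs_def by auto
  have e: "(\<Sum>v\<in>vecs (Suc m). chi (PQ c v)) =
     (\<Sum>v\<in>Pow ?A. chi (PQ c v)) + (\<Sum>v\<in>Pow ?A. chi (PQ c (insert (2*m) v)))
     + (\<Sum>v\<in>Pow ?A. chi (PQ c (insert (2*m+1) v)))
     + (\<Sum>v\<in>Pow ?A. chi (PQ c (insert (2*m+1) (insert (2*m) v))))"
    unfolding vs by (simp add: sum_Pow_insert)
  have pp0: "pp (2*m) = 2*m+1" "pp (Suc (2*m)) = 2*m" unfolding pp_def by auto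
  have t1: "chi (PQ c (insert (2*m) v)) = chi (c (2*m)) * chi (PQ c v)" if "v \<in> Pow ?A" for v
  proof -
    have "finite v" using that finite_subset by auto
    moreover have "2*m+1 \<notin> v" "2*m \<notin> v" using that by auto
    ultimately show ?thesis by (subst PQ_insert) (auto simp: pp0 chi_def)
  qed
  have t2: "chi (PQ c (insert (2*m+1) v)) = chi (c (2*m+1)) * chi (PQ c v)" if "v \<in> Pow ?A" for v
  proof -
    have "finite v" using that finite_subset by auto
    moreover have "2*m+1 \<notin> v" "2*m \<notin> v" using that by auto
    ultimately show ?thesis by (subst PQ_insert) (auto simp: pp0 chi_def)
  qed
  have t3: "chi (PQ c (insert (2*m+1) (insert (2*m) v))) =
       - chi (c (2*m+1)) * chi (c (2*m)) * chi (PQ c v)" if "v \<in> Pow ?A" for v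
  proof -
    have "finite v" using that finite_subset by auto
    moreover have "2*m+1 \<notin> v" "2*m \<notin> v" using that by auto
    ultimately show ?thesis
      by (subst PQ_insert, simp, force) (subst PQ_insert, auto simp: pp0 chi_def)
  qed
  have s1: "(\<Sum>v\<in>Pow ?A. chi (PQ c (insert (2*m) v))) = chi (c (2*m)) * ?S"
    unfolding vm sum_distrib_left using t1 by (rule sum.cong[OF refl])
  have s2: "(\<Sum>v\<in>Pow ?A. chi (PQ c (insert (2*m+1) v))) = chi (c (2*m+1)) * ?S"
    unfolding vm sum_distrib_left using t2 by (rule sum.cong[OF refl])
  have s3: "(\<Sum>v\<in>Pow ?A. chi (PQ c (insert (2*m+1) (insert (2*m) v)))) =
       (- chi (c (2*m+1)) * chi (c (2*m))) * ?S"
    unfolding vm sum_distrib_left using t3 by (rule sum.cong[OF refl])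
  have "(\<Sum>v\<in>vecs (Suc m). chi (PQ c v)) =
      ?S * (1 + chi (c (2*m)) + chi (c (2*m+1)) - chi (c (2*m+1)) * chi (c (2*m)))"
  proof -
    have "(\<Sum>v\<in>vecs (Suc m). chi (PQ c v)) = (\<Sum>v\<in>Pow ?A. chi (PQ c v)) + chi (c (2*m)) * ?S
       + chi (c (2*m+1)) * ?S + (- chi (c (2*m+1)) * chi (c (2*m))) * ?S"
      by (simp only: e s1 s2 s3)
    moreover have "(\<Sum>v\<in>Pow ?A. chi (PQ c v)) = ?S" by (simp only: vm)
    ultimately show ?thesis by (rule aux_ring)
  qed
  also have "\<dots> = (if even (arf (Suc m) c) then 1 else -1) * 2 ^ Suc m"
    unfolding Suc.IH arf_Suc by (rule aux_sign)
  finally show ?case .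
qed

definition closedW :: "nat set set \<Rightarrow> bool" where
  "closedW W \<longleftrightarrow> {} \<in> W \<and> (\<forall>u\<in>W. \<forall>v\<in>W. vadd u v \<in> W)"

lemma double:
  assumes "finite W" "closedW W" "e \<notin> W"
  shows "closedW (W \<union> vadd e ` W)" "card (W \<union> vadd e ` W) = 2 * card W"
proof -
  show "closedW (W \<union> vadd e ` W)"
    unfolding closedW_def
  proof (intro conjI ballI)
    show "{} \<in> W \<union> vadd e ` W" using assms(2) unfolding closedW_def by blast
  next
    fix x y assume x: "x \<in> W \<union> vadd e ` W" and y: "y \<in> W \<union> vadd e ` W"
    have c: "\<And>u v. u \<in> W \<Longrightarrow> v \<in> W \<Longrightarrow> vadd u v \<in> W" using assms(2) unfolding closedW_def by blast
    have i1: "\<And>a b. vadd (vadd e a) b = vadd e (vadd a b)" unfolding vadd_def by blast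
    have i2: "\<And>a b. vadd a (vadd e b) = vadd e (vadd a b)" unfolding vadd_def by blast
    have i3: "\<And>a b. vadd (vadd e a) (vadd e b) = vadd a b" unfolding vadd_def by blast
    from x y show "vadd x y \<in> W \<union> vadd e ` W"
      by (elim UnE imageE) (simp_all add: i1 i2 i3 c)
  qed
next
  have d: "W \<inter> vadd e ` W = {}"
  proof (rule ccontr)
    assume "W \<inter> vadd e ` W \<noteq> {}"
    then obtain w1 w2 where "w1 \<in> W" "w2 \<in> W" "w1 = vadd e w2" by blast
    hence "e = vadd w1 w2" by (metis vadd_assoc vadd_self vadd_empty(1))
    thus False using assms \<open>w1 \<in> W\<close> \<open>w2 \<in> W\<close> unfolding closedW_def by blast
  qed
  have i: "inj_on (vadd e) W" unfolding inj_on_def by (metis vadd_cancel(1))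
  show "card (W \<union> vadd e ` W) = 2 * card W"
    using assms(1) d i by (simp add: card_Un_disjoint card_image)
qed


lemma closedW_sub: "W \<subseteq> vecs m \<Longrightarrow> finite W" using finite_vecs finite_subset by blast

lemma construct:
  "\<exists>W. W \<subseteq> vecs m \<and> closedW W \<and> card W = 2^m \<and>
     (if even (arf m c) then (\<forall>w\<in>W. \<not> PQ c w)
      else (\<exists>j<2*m. c (pp j) \<and> (\<forall>w\<in>W. PQ c w = (j \<in> w))))"
proof (induction m)
  case 0
  have "vecs 0 = {{}}" unfolding vecs_def by auto
  moreover have "closedW {{}}" unfolding closedW_def by auto
  ultimately show ?case unfolding arf_def by (intro exI[of _ "{{}}"]) auto
next
  case (Suc m)
  then obtain W where W: "W \<subseteq> vecs m" "closedW W" "card W = 2^m"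
    and P: "if even (arf m c) then (\<forall>w\<in>W. \<not> PQ c w)
      else (\<exists>j<2*m. c (pp j) \<and> (\<forall>w\<in>W. PQ c w = (j \<in> w)))" by blast
  have fW: "finite W" using W(1) by (rule closedW_sub)
  have wsub: "\<And>w. w \<in> W \<Longrightarrow> w \<subseteq> {..<2*m}" using W(1) unfolding vecs_def by auto
  have wfin: "\<And>w. w \<in> W \<Longrightarrow> finite w" using wsub finite_subset by blast
  have pp0: "pp (2*m) = Suc (2*m)" "pp (Suc (2*m)) = 2*m" unfolding pp_def by auto
  show ?case
  proof (cases "c (2*m) \<and> c (Suc (2*m))")
    case False
    define x where "x = (if \<not> c (2*m) then 2*m else Suc (2*m))"
    have cx: "\<not> c x" using False unfolding x_def by auto
    have ppx: "pp x = 2*m \<or> pp x = Suc (2*m)" unfolding x_def using pp0 by auto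
    have xge: "x \<ge> 2*m" "x < 2 * Suc m" unfolding x_def by auto
    have xw: "\<And>w. w \<in> W \<Longrightarrow> x \<notin> w \<and> pp x \<notin> w" using wsub xge ppx by fastforce
    have eW: "{x} \<notin> W" using xw by blast
    have ins: "\<And>w. w \<in> W \<Longrightarrow> vadd {x} w = insert x w" using xw unfolding vadd_def by auto
    have PQi: "\<And>w. w \<in> W \<Longrightarrow> PQ c (insert x w) = PQ c w"
      using xw wfin cx by (subst PQ_insert) auto
    define W' where "W' = W \<union> vadd {x} ` W"
    have c1: "closedW W'" "card W' = 2^Suc m" unfolding W'_def using double[OF fW W(2) eW] W(3) by auto
    have "v \<subseteq> {..<2 * Suc m}" if "v \<in> W'" for v
      using that unfolding W'_def using wsub xge ins by fastforce
    hence s1: "W' \<subseteq> vecs (Suc m)" unfolding vecs_def by blast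
    have arfeq: "arf (Suc m) c = arf m c" using False by (simp add: arf_Suc)
    show ?thesis
    proof (cases "even (arf m c)")
      case True
      hence "\<forall>w\<in>W'. \<not> PQ c w" using P unfolding W'_def using ins PQi by auto
      moreover have ne: "even (arf (Suc m) c)" using True arfeq by simp
      ultimately show ?thesis unfolding if_P[OF ne] using c1 s1 by blast
    next
      case odd: False
      then obtain j where j: "j < 2*m" "c (pp j)" "\<forall>w\<in>W. PQ c w = (j \<in> w)" using P by auto
      have "\<forall>w\<in>W'. PQ c w = (j \<in> w)" unfolding W'_def using ins PQi j xge by auto
      hence ex: "\<exists>j<2*Suc m. c (pp j) \<and> (\<forall>w\<in>W'. PQ c w = (j \<in> w))" using j(1,2)
        by (intro exI[of _ j]) auto
      have ne: "\<not> even (arf (Suc m) c)" using odd arfeq by simp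
      show ?thesis unfolding if_not_P[OF ne] using c1 s1 ex by blast
    qed
  next
    case True
    hence cc: "c (2*m)" "c (Suc (2*m))" by auto
    have x0: "\<And>w. w \<in> W \<Longrightarrow> 2*m \<notin> w \<and> Suc (2*m) \<notin> w" using wsub by fastforce
    show ?thesis
    proof (cases "even (arf m c)")
      case ev: True
      have arfeq: "arf (Suc m) c = Suc (arf m c)" using True by (simp add: arf_Suc)
      have eW: "{2*m} \<notin> W" using x0 by blast
      have ins: "\<And>w. w \<in> W \<Longrightarrow> vadd {2*m} w = insert (2*m) w" using x0 unfolding vadd_def by auto
      have PQi: "\<And>w. w \<in> W \<Longrightarrow> PQ c (insert (2*m) w) = True"
        using x0 wfin cc P ev by (subst PQ_insert) (auto simp: pp0)
      define W' where "W' = W \<union> vadd {2*m} ` W"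
      have c1: "closedW W'" "card W' = 2^Suc m" unfolding W'_def using double[OF fW W(2) eW] W(3) by auto
      have "v \<subseteq> {..<2 * Suc m}" if "v \<in> W'" for v
        using that unfolding W'_def using wsub ins by fastforce
      hence s1: "W' \<subseteq> vecs (Suc m)" unfolding vecs_def by blast
      have "\<forall>w\<in>W'. PQ c w = (2*m \<in> w)" unfolding W'_def using ins PQi P ev x0 by auto
      moreover have "c (pp (2*m))" using cc pp0 by simp
      ultimately have ex: "\<exists>j<2*Suc m. c (pp j) \<and> (\<forall>w\<in>W'. PQ c w = (j \<in> w))"
        by (intro exI[of _ "2*m"]) auto
      have ne: "\<not> even (arf (Suc m) c)" using ev arfeq by simp
      show ?thesis unfolding if_not_P[OF ne] using c1 s1 ex by blast
    next
      case odd: False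
      have arfeq: "arf (Suc m) c = Suc (arf m c)" using True by (simp add: arf_Suc)
      obtain j where j: "j < 2*m" "c (pp j)" "\<forall>w\<in>W. PQ c w = (j \<in> w)" using P odd by auto
      have ppj: "pp j < 2*m" using j(1) by (rule pp_less)
      define f where "f w = (if j \<in> w then insert (2*m) w else w)" for w
      define W1 where "W1 = f ` W"
      have fadd: "f (vadd a b) = vadd (f a) (f b)" if "a \<in> W" "b \<in> W" for a b
        using x0[OF that(1)] x0[OF that(2)] unfolding f_def vadd_def by auto
      have finj: "inj_on f W"
      proof (rule inj_onI)
        fix a b assume ab: "a \<in> W" "b \<in> W" "f a = f b"
        have "f a - {2*m} = a" "f b - {2*m} = b" using x0 ab(1,2) unfolding f_def by auto
        thus "a = b" using ab(3) by metis
      qed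
      have cW1: "closedW W1" unfolding closedW_def W1_def
      proof (intro conjI ballI)
        have "f {} = {}" unfolding f_def by simp
        thus "{} \<in> f ` W" using W(2) unfolding closedW_def by force
      next
        fix u v assume "u \<in> f ` W" "v \<in> f ` W"
        then obtain a b where "a \<in> W" "b \<in> W" "u = f a" "v = f b" by blast
        moreover have "vadd a b \<in> W" using \<open>a \<in> W\<close> \<open>b \<in> W\<close> W(2) unfolding closedW_def by blast
        ultimately show "vadd u v \<in> f ` W" using fadd by (metis image_eqI)
      qed
      have cardW1: "card W1 = 2^m" unfolding W1_def using card_image[OF finj] W(3) by simp
      have fW1: "finite W1" unfolding W1_def using fW by simp
      define u where "u = {pp j, Suc (2*m)}"
      have fnot: "\<And>w. w \<in> W \<Longrightarrow> Suc (2*m) \<notin> f w" using x0 unfolding f_def by auto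
      have uW1: "u \<notin> W1" unfolding W1_def u_def using fnot by auto
      define W' where "W' = W1 \<union> vadd u ` W1"
      have c1: "closedW W'" "card W' = 2^Suc m" unfolding W'_def using double[OF fW1 cW1 uW1] cardW1 by auto
      have fsub: "f w \<subseteq> {..<2 * Suc m}" if "w \<in> W" for w
        using wsub[OF that] unfolding f_def by auto
      have usub: "u \<subseteq> {..<2 * Suc m}" unfolding u_def using ppj by auto
      have s1: "W' \<subseteq> vecs (Suc m)" unfolding W'_def W1_def vecs_def using fsub usub
        unfolding vadd_def by blast
      have ffin: "\<And>w. w \<in> W \<Longrightarrow> finite (f w)" using fsub finite_subset by blast
      have PQf: "\<not> PQ c (f w)" if "w \<in> W" for w
      proof (cases "j \<in> w")
        case True
        hence "f w = insert (2*m) w" unfolding f_def by simp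
        moreover have "PQ c (insert (2*m) w) = ((c (2*m) \<noteq> PQ c w) \<noteq> (pp (2*m) \<in> w))"
          using x0[OF that] wfin[OF that] by (intro PQ_insert) auto
        ultimately show ?thesis using True that x0[OF that] cc j(3) by (simp add: pp0)
      next
        case False
        thus ?thesis unfolding f_def using that j(3) by auto
      qed
      have PQu: "\<not> PQ c u"
      proof -
        have "pp j \<noteq> Suc (2*m)" using ppj by auto
        hence "PQ c u = ((c (pp j) \<noteq> PQ c {Suc (2*m)}) \<noteq> (pp (pp j) \<in> {Suc (2*m)}))"
          unfolding u_def by (subst PQ_insert) auto
        thus ?thesis using j(1,2) cc by (simp add: PQ_single)
      qed
      have bfu: "\<not> bf u (f w)" if "w \<in> W" for w
      proof -
        have "pp j \<noteq> Suc (2*m)" using ppj by auto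
        hence "u = vadd {pp j} {Suc (2*m)}" unfolding u_def vadd_def by auto
        hence "bf u (f w) = (bf (f w) {pp j} \<noteq> bf (f w) {Suc (2*m)})"
          by (simp add: bf_sym[of _ "f w"] bf_add2)
        also have "\<dots> = ((j \<in> f w) \<noteq> (2*m \<in> f w))" by (simp add: bf_single pp0)
        also have "\<dots> = False" unfolding f_def using x0[OF that] j(1) by auto
        finally show ?thesis by simp
      qed
      have "\<forall>w\<in>W'. \<not> PQ c w"
      proof
        fix w assume "w \<in> W'"
        then consider (a) "w \<in> W1" | (b) v where "v \<in> W" "w = vadd u (f v)"
          unfolding W'_def W1_def by blast
        thus "\<not> PQ c w"
        proof cases
          case a thus ?thesis using PQf unfolding W1_def by auto
        next
          case b
          have "finite u" unfolding u_def by simp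
          hence "PQ c w = ((PQ c u \<noteq> PQ c (f v)) \<noteq> bf u (f v))"
            unfolding b(2) using ffin[OF b(1)] by (rule PQ_add)
          thus ?thesis using PQu PQf[OF b(1)] bfu[OF b(1)] by simp
        qed
      qed
      moreover have ne: "even (arf (Suc m) c)" using odd arfeq by simp
      ultimately show ?thesis unfolding if_P[OF ne] using c1 s1 by blast
    qed
  qed
qed

lemma flip_bij: assumes "\<forall>x\<in>A. vadd e x \<in> A" shows "bij_betw (vadd e) A A"
  unfolding bij_betw_def
proof
  show "inj_on (vadd e) A" unfolding inj_on_def by (metis vadd_cancel(1))
  show "vadd e ` A = A"
  proof
    show "vadd e ` A \<subseteq> A" using assms by blast
    show "A \<subseteq> vadd e ` A"
    proof
      fix x assume "x \<in> A"
      hence "vadd e x \<in> A" using assms by blast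
      moreover have "x = vadd e (vadd e x)" by simp
      ultimately show "x \<in> vadd e ` A" by blast
    qed
  qed
qed

lemma sum_flip_zero:
  fixes g :: "nat set \<Rightarrow> int"
  assumes "\<forall>x\<in>A. vadd e x \<in> A" "\<forall>x\<in>A. g (vadd e x) = - g x"
  shows "sum g A = 0"
proof -
  have "sum g A = sum (\<lambda>x. g (vadd e x)) A"
    using sum.reindex_bij_betw[OF flip_bij[OF assms(1)], of g] by simp
  also have "\<dots> = sum (\<lambda>x. - g x) A" using assms(2) by (intro sum.cong) auto
  also have "\<dots> = - sum g A" by (simp add: sum_negf)
  finally show ?thesis by simp
qed

lemma sum_flip_eq:
  fixes g :: "nat set \<Rightarrow> int"
  assumes "\<forall>x\<in>A. vadd e x \<in> A"
  shows "sum (\<lambda>x. g (vadd e x)) A = sum g A"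
  using sum.reindex_bij_betw[OF flip_bij[OF assms(1)], of g] by simp

lemma plus_S:
  assumes Q: "Q \<in> qforms m" and W: "is_subspace m W" "card W = 2^m" "\<forall>w\<in>W. \<not> Q w"
  shows "(\<Sum>v\<in>vecs m. chi (Q v)) = 2^m"
proof -
  let ?V = "vecs m"
  define Wp where "Wp = {v\<in>?V. \<forall>w\<in>W. \<not> bf v w}"
  have WV: "W \<subseteq> ?V" and W0: "{} \<in> W" and Wc: "\<And>u v. u \<in> W \<Longrightarrow> v \<in> W \<Longrightarrow> vadd u v \<in> W"
    using W(1) unfolding is_subspace_def by auto
  have fV: "finite ?V" by (rule finite_vecs)
  have fW: "finite W" using WV fV finite_subset by blast
  have vfin: "\<And>v. v \<in> ?V \<Longrightarrow> finite v" by (rule vecs_finite)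
  have i: "(\<Sum>w\<in>W. chi (bf v w)) = (if v \<in> Wp then int (card W) else 0)" if v: "v \<in> ?V" for v
  proof (cases "v \<in> Wp")
    case True
    hence "\<forall>w\<in>W. chi (bf v w) = 1" unfolding Wp_def chi_def by auto
    thus ?thesis using True by simp
  next
    case False
    then obtain w0 where w0: "w0 \<in> W" "bf v w0" unfolding Wp_def using v by auto
    have "(\<Sum>w\<in>W. chi (bf v w)) = 0"
    proof (rule sum_flip_zero[where e=w0])
      show "\<forall>x\<in>W. vadd w0 x \<in> W" using Wc w0 by blast
      show "\<forall>x\<in>W. chi (bf v (vadd w0 x)) = - chi (bf v x)"
      proof
        fix x assume "x \<in> W"
        hence "bf v (vadd w0 x) = (bf v w0 \<noteq> bf v x)"
          using WV w0 vfin by (intro bf_add2) auto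
        thus "chi (bf v (vadd w0 x)) = - chi (bf v x)" using w0 unfolding chi_def by auto
      qed
    qed
    thus ?thesis using False by simp
  qed
  have ii: "(\<Sum>v\<in>?V. chi (bf v w)) = (if w = {} then int (card ?V) else 0)" if w: "w \<in> W" for w
  proof (cases "w = {}")
    case True
    thus ?thesis unfolding chi_def by simp
  next
    case False
    then obtain j where j: "j \<in> w" by blast
    have jm: "j < 2*m" using j w WV unfolding vecs_def by auto
    define e where "e = {pp j}"
    have eV: "e \<in> ?V" unfolding e_def vecs_def using pp_less[OF jm] by auto
    have be: "bf e w" unfolding e_def using j by (simp add: bf_sym[of "{pp j}"] bf_single)
    have "(\<Sum>v\<in>?V. chi (bf v w)) = 0"
    proof (rule sum_flip_zero[where e=e])
      show "\<forall>x\<in>?V. vadd e x \<in> ?V" using eV vecs_vadd by blast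
      show "\<forall>x\<in>?V. chi (bf (vadd e x) w) = - chi (bf x w)"
      proof
        fix x assume "x \<in> ?V"
        hence "bf (vadd e x) w = (bf e w \<noteq> bf x w)"
          using eV vfin by (intro bf_add1) auto
        thus "chi (bf (vadd e x) w) = - chi (bf x w)" using be unfolding chi_def by auto
      qed
    qed
    thus ?thesis using False by simp
  qed
  have "(\<Sum>v\<in>?V. \<Sum>w\<in>W. chi (bf v w)) = (\<Sum>w\<in>W. \<Sum>v\<in>?V. chi (bf v w))"
    by (rule sum.swap)
  also have "\<dots> = (\<Sum>w\<in>W. if w = {} then int (card ?V) else 0)" using ii by simp
  also have "\<dots> = int (card ?V)" using fW W0 by (simp add: sum.delta)
  finally have e1: "(\<Sum>v\<in>?V. \<Sum>w\<in>W. chi (bf v w)) = int (card ?V)" .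
  have "(\<Sum>v\<in>?V. \<Sum>w\<in>W. chi (bf v w)) = (\<Sum>v\<in>?V. if v \<in> Wp then int (card W) else 0)"
    using i by simp
  also have "\<dots> = int (card Wp) * int (card W)"
  proof -
    have "Wp \<subseteq> ?V" unfolding Wp_def by auto
    hence "?V \<inter> Wp = Wp" by blast
    thus ?thesis using fV by (simp add: sum.If_cases)
  qed
  finally have "int (card Wp) * 2^m = 4^m" using e1 W(2) card_vecs by simp
  hence "int (card Wp) * 2^m = 2^m * 2^m" by (simp add: power_mult_distrib[symmetric])
  hence cWp: "card Wp = card W" using W(2) by simp
  have WWp: "W \<subseteq> Wp"
  proof
    fix w assume w: "w \<in> W"
    have "\<forall>w'\<in>W. \<not> bf w w'"
    proof
      fix w' assume w': "w' \<in> W"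
      have "Q (vadd w w') = ((Q w \<noteq> Q w') \<noteq> bf w w')"
        using w w' WV by (intro qform_add[OF Q]) auto
      thus "\<not> bf w w'" using W(3) Wc[OF w w'] w w' by auto
    qed
    thus "w \<in> Wp" unfolding Wp_def using w WV by auto
  qed
  have fWp: "finite Wp" unfolding Wp_def using fV by simp
  have WeqWp: "W = Wp" using card_subset_eq[OF fWp WWp cWp[symmetric]] .
  let ?S = "\<Sum>v\<in>?V. chi (Q v)"
  have iii: "(\<Sum>v\<in>?V. chi (Q (vadd w v))) = ?S" if w: "w \<in> W" for w
    using sum_flip_eq[of ?V w "\<lambda>v. chi (Q v)"] w WV vecs_vadd by blast
  have iv: "chi (Q (vadd w v)) = chi (Q v) * chi (bf v w)" if "w \<in> W" "v \<in> ?V" for w v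
  proof -
    have "Q (vadd w v) = ((Q w \<noteq> Q v) \<noteq> bf w v)" using that WV by (intro qform_add[OF Q]) auto
    thus ?thesis using W(3) that bf_sym[of w v] unfolding chi_def by auto
  qed
  have "int (card W) * ?S = (\<Sum>w\<in>W. ?S)" by simp
  also have "\<dots> = (\<Sum>w\<in>W. \<Sum>v\<in>?V. chi (Q v) * chi (bf v w))"
  proof (rule sum.cong[OF refl])
    fix w assume w: "w \<in> W"
    have "(\<Sum>v\<in>?V. chi (Q v) * chi (bf v w)) = (\<Sum>v\<in>?V. chi (Q (vadd w v)))"
      using iv[OF w] by (intro sum.cong) auto
    thus "?S = (\<Sum>v\<in>?V. chi (Q v) * chi (bf v w))" using iii[OF w] by simp
  qed
  also have "\<dots> = (\<Sum>v\<in>?V. chi (Q v) * (\<Sum>w\<in>W. chi (bf v w)))"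
    by (subst sum.swap) (simp add: sum_distrib_left)
  also have "\<dots> = (\<Sum>v\<in>?V. if v \<in> W then int (card W) else 0)"
  proof (rule sum.cong[OF refl])
    fix v assume v: "v \<in> ?V"
    show "chi (Q v) * (\<Sum>w\<in>W. chi (bf v w)) = (if v \<in> W then int (card W) else 0)"
      using i[OF v] WeqWp W(3) unfolding chi_def by auto
  qed
  also have "\<dots> = int (card W) * int (card W)"
  proof -
    have "?V \<inter> W = W" using WV by blast
    thus ?thesis using fV by (simp add: sum.If_cases)
  qed
  finally have "int (card W) * ?S = int (card W) * int (card W)" .
  moreover have "card W > 0" using W0 fW card_gt_0_iff by blast
  ultimately have "?S = int (card W)" by simp
  thus ?thesis using W(2) by simp
qed

lemma functional:
  assumes Q: "Q \<in> qforms m" and Q': "Q' \<in> qforms m"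
  shows "\<exists>a\<in>vecs m. \<forall>v\<in>vecs m. Q' v = (Q v \<noteq> bf a v)"
proof -
  define phi where "phi v = (Q v \<noteq> Q' v)" for v
  have padd: "phi (vadd u v) = (phi u \<noteq> phi v)" if "u \<in> vecs m" "v \<in> vecs m" for u v
    unfolding phi_def using qform_add[OF Q that] qform_add[OF Q' that] by auto
  define a where "a = {j. j < 2*m \<and> phi {pp j}}"
  have aV: "a \<in> vecs m" unfolding a_def vecs_def by auto
  have "phi v = bf a v" if "v \<in> vecs m" for v
  proof -
    have "finite v" "v \<subseteq> {..<2*m}" using that unfolding vecs_def by (auto intro: finite_subset)
    thus ?thesis
    proof (induction v rule: finite_induct)
      case empty
      then show ?case unfolding phi_def using qform_empty[OF Q] qform_empty[OF Q'] by simp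
    next
      case (insert x F)
      have x: "{x} \<in> vecs m" and F: "F \<in> vecs m" using insert unfolding vecs_def by auto
      have xm: "x < 2*m" using insert by auto
      have "phi (insert x F) = (phi {x} \<noteq> phi F)"
        unfolding vadd_insert[OF insert(2)] by (rule padd[OF x F])
      moreover have "bf a (insert x F) = (bf a {x} \<noteq> bf a F)"
        unfolding vadd_insert[OF insert(2)] by (rule bf_add2) (use insert in auto)
      moreover have "bf a {x} = phi {x}" unfolding bf_single a_def using pp_less[OF xm] by simp
      ultimately show ?case using insert by simp
    qed
  qed
  thus ?thesis using aV unfolding phi_def by (intro bexI[of _ a]) auto
qed

lemma S_Q:
  assumes Q: "Q \<in> qforms m"
  shows "(\<Sum>v\<in>vecs m. chi (Q v)) = (if even (arf m (\<lambda>j. Q {j})) then 1 else -1) * 2 ^ m"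
proof -
  have "(\<Sum>v\<in>vecs m. chi (Q v)) = (\<Sum>v\<in>vecs m. chi (PQ (\<lambda>j. Q {j}) v))"
    using qform_PQ[OF Q] by (intro sum.cong) auto
  thus ?thesis using S_formula by simp
qed

lemma even_plus:
  assumes Q: "Q \<in> qforms m" and ev: "even (arf m (\<lambda>j. Q {j}))"
  shows "plus_type m Q"
proof -
  obtain W where W: "W \<subseteq> vecs m" "closedW W" "card W = 2^m" "\<forall>w\<in>W. \<not> PQ (\<lambda>j. Q {j}) w"
    using construct[of m "\<lambda>j. Q {j}"] ev by auto
  have "\<forall>w\<in>W. \<not> Q w" using W(1,4) qform_PQ[OF Q] by auto
  moreover have "is_subspace m W" using W(1,2) unfolding is_subspace_def closedW_def by auto
  ultimately show ?thesis unfolding plus_type_def using W(3) by blast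
qed

lemma plus_S2:
  assumes Q: "Q \<in> qforms m" and p: "plus_type m Q"
  shows "(\<Sum>v\<in>vecs m. chi (Q v)) = 2^m"
  using p plus_S[OF Q] unfolding plus_type_def by blast

lemma type_zero:
  assumes Q: "Q \<in> qforms m" and Q': "Q' \<in> qforms m" and a: "a \<in> vecs m"
    and rel: "\<forall>v\<in>vecs m. Q' v = (Q v \<noteq> bf a v)"
    and same: "plus_type m Q = plus_type m Q'"
  shows "\<not> Q a"
proof
  assume Qa: "Q a"
  let ?S = "\<lambda>Q. (\<Sum>v\<in>vecs m. chi (Q v))"
  have "?S Q = (\<Sum>v\<in>vecs m. chi (Q (vadd a v)))"
    using sum_flip_eq[of "vecs m" a "\<lambda>v. chi (Q v)"] a vecs_vadd by auto
  also have "\<dots> = (\<Sum>v\<in>vecs m. - chi (Q' v))"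
  proof (rule sum.cong[OF refl])
    fix v assume v: "v \<in> vecs m"
    have "Q (vadd a v) = ((Q a \<noteq> Q v) \<noteq> bf a v)" by (rule qform_add[OF Q a v])
    thus "chi (Q (vadd a v)) = - chi (Q' v)" using rel v Qa unfolding chi_def by auto
  qed
  finally have f1: "?S Q = - ?S Q'" by (simp add: sum_negf)
  have pos: "(2::int)^m > 0" by simp
  show False
  proof (cases "plus_type m Q")
    case True
    hence "?S Q = 2^m" "?S Q' = 2^m" using plus_S2 Q Q' same by auto
    thus False using f1 pos by simp
  next
    case False
    hence "odd (arf m (\<lambda>j. Q {j}))" "odd (arf m (\<lambda>j. Q' {j}))"
      using even_plus Q Q' same by auto
    hence "?S Q = - (2^m)" "?S Q' = - (2^m)" using S_Q[OF Q] S_Q[OF Q'] by auto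
    thus False using f1 pos by simp
  qed
qed

lemma nondeg:
  assumes "x \<in> vecs m" "\<forall>v\<in>vecs m. \<not> bf x v"
  shows "x = {}"
proof (rule ccontr)
  assume "x \<noteq> {}"
  then obtain j where j: "j \<in> x" by blast
  hence jm: "j < 2*m" using assms(1) unfolding vecs_def by auto
  have "{pp j} \<in> vecs m" using pp_less[OF jm] unfolding vecs_def by auto
  moreover have "bf x {pp j}" using j by (simp add: bf_single)
  ultimately show False using assms(2) by blast
qed

lemma sp_vec: "g \<in> Sp m \<Longrightarrow> v \<in> vecs m \<Longrightarrow> g v \<in> vecs m"
  unfolding Sp_def bij_betw_def by auto

lemma sp_out: "g \<in> Sp m \<Longrightarrow> v \<notin> vecs m \<Longrightarrow> g v = v"
  unfolding Sp_def by auto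

lemma sp_add: "g \<in> Sp m \<Longrightarrow> u \<in> vecs m \<Longrightarrow> v \<in> vecs m \<Longrightarrow> g (vadd u v) = vadd (g u) (g v)"
  unfolding Sp_def by auto

lemma sp_symp: assumes "g \<in> Sp m" "u \<in> vecs m" "v \<in> vecs m" shows "bf (g u) (g v) = bf u v"
proof -
  have "symp m (g u) (g v) = symp m u v" using assms unfolding Sp_def by blast
  moreover have "symp m (g u) (g v) = bf (g u) (g v)" using sp_vec[OF assms(1,2)] by (rule symp_bf)
  moreover have "symp m u v = bf u v" using assms(2) by (rule symp_bf)
  ultimately show ?thesis by simp
qed

lemma sp_surj: assumes "g \<in> Sp m" "x \<in> vecs m" shows "\<exists>v\<in>vecs m. x = g v"
proof -
  have "g ` vecs m = vecs m" using assms(1) unfolding Sp_def bij_betw_def by auto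
  thus ?thesis using assms(2) by blast
qed

lemma sp_bij: assumes g: "g \<in> Sp m" shows "bij g"
proof (rule bijI)
  show "inj g"
  proof (rule injI)
    fix x y assume e: "g x = g y"
    have bb: "bij_betw g (vecs m) (vecs m)" using g unfolding Sp_def by auto
    show "x = y"
    proof (cases "x \<in> vecs m"; cases "y \<in> vecs m")
      assume "x \<in> vecs m" "y \<in> vecs m"
      thus ?thesis using bb e unfolding bij_betw_def inj_on_def by blast
    next
      assume "x \<in> vecs m" "y \<notin> vecs m"
      thus ?thesis using e sp_vec[OF g, of x] sp_out[OF g, of y] by simp
    next
      assume "x \<notin> vecs m" "y \<in> vecs m"
      thus ?thesis using e sp_vec[OF g, of y] sp_out[OF g, of x] by simp
    next
      assume "x \<notin> vecs m" "y \<notin> vecs m"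
      thus ?thesis using e sp_out[OF g] by simp
    qed
  qed
  show "surj g"
  proof -
    have "y \<in> range g" for y
    proof (cases "y \<in> vecs m")
      case True thus ?thesis using sp_surj[OF g] by blast
    next
      case False thus ?thesis using sp_out[OF g] by (metis rangeI)
    qed
    thus ?thesis by blast
  qed
qed

lemma sp_comp: assumes g: "g \<in> Sp m" and h: "h \<in> Sp m" shows "g \<circ> h \<in> Sp m"
proof -
  have bg: "bij_betw g (vecs m) (vecs m)" using g unfolding Sp_def by simp
  have bh: "bij_betw h (vecs m) (vecs m)" using h unfolding Sp_def by simp
  have 1: "bij_betw (g \<circ> h) (vecs m) (vecs m)" by (rule bij_betw_trans[OF bh bg])
  have 2: "\<forall>x. x \<notin> vecs m \<longrightarrow> (g \<circ> h) x = x" using sp_out[OF g] sp_out[OF h] by simp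
  have 3: "\<forall>u\<in>vecs m. \<forall>v\<in>vecs m. (g \<circ> h) (vadd u v) = vadd ((g \<circ> h) u) ((g \<circ> h) v)"
    using sp_add[OF g] sp_add[OF h] sp_vec[OF h] by simp
  have 4: "\<forall>u\<in>vecs m. \<forall>v\<in>vecs m. symp m ((g \<circ> h) u) ((g \<circ> h) v) = symp m u v"
  proof (intro ballI)
    fix u v assume u: "u \<in> vecs m" and v: "v \<in> vecs m"
    have "symp m ((g \<circ> h) u) ((g \<circ> h) v) = bf (g (h u)) (g (h v))"
      using symp_bf sp_vec[OF g sp_vec[OF h u]] by simp
    also have "\<dots> = bf u v" using sp_symp[OF g sp_vec[OF h u] sp_vec[OF h v]] sp_symp[OF h u v] by simp
    also have "\<dots> = symp m u v" using symp_bf[OF u] by simp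
    finally show "symp m ((g \<circ> h) u) ((g \<circ> h) v) = symp m u v" .
  qed
  show ?thesis unfolding Sp_def using 1 2 3 4 by (simp only: mem_Collect_eq)
qed

lemma qact_comp: "bij f \<Longrightarrow> bij g \<Longrightarrow> qact (f \<circ> g) Q = qact f (qact g Q)"
  unfolding qact_def by (simp add: o_inv_distrib o_assoc)

lemma qact_id: "qact id Q = Q" unfolding qact_def by simp

lemma qact_fix: assumes "bij g" "qact g Q = Q" shows "Q (g v) = Q v"
proof -
  have "Q (g v) = (Q \<circ> inv g) (g v)" using assms(2) unfolding qact_def by simp
  also have "\<dots> = Q v" using assms(1) by (simp add: bij_is_inj)
  finally show ?thesis .
qed

lemma qact_invol: "s \<circ> s = id \<Longrightarrow> qact s Q = Q \<circ> s"
  unfolding qact_def using inv_unique_comp by metis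

definition tr :: "nat \<Rightarrow> nat set \<Rightarrow> nat set \<Rightarrow> nat set" where
  "tr m a v = (if v \<in> vecs m \<and> bf a v then vadd a v else v)"

lemma tr_vec: "a \<in> vecs m \<Longrightarrow> v \<in> vecs m \<Longrightarrow> tr m a v \<in> vecs m"
  unfolding tr_def using vecs_vadd by auto

lemma tr_invol: assumes a: "a \<in> vecs m" shows "tr m a \<circ> tr m a = id"
proof
  fix v
  show "(tr m a \<circ> tr m a) v = id v"
  proof (cases "v \<in> vecs m \<and> bf a v")
    case True
    hence "bf a (vadd a v) = True"
      using a vecs_finite by (subst bf_add2) auto
    moreover have "vadd a v \<in> vecs m" using a True vecs_vadd by blast
    ultimately show ?thesis using True unfolding tr_def by simp
  next
    case False
    thus ?thesis unfolding tr_def by auto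
  qed
qed

lemma tr_Sp: assumes a: "a \<in> vecs m" shows "tr m a \<in> Sp m"
proof -
  have inv: "\<And>v. tr m a (tr m a v) = v" using tr_invol[OF a] by (metis comp_apply id_apply)
  have 1: "bij_betw (tr m a) (vecs m) (vecs m)"
    by (rule bij_betw_byWitness[where f'="tr m a"]) (use inv tr_vec[OF a] in auto)
  have 2: "\<forall>x. x \<notin> vecs m \<longrightarrow> tr m a x = x" unfolding tr_def by auto
  have 3: "tr m a (vadd u v) = vadd (tr m a u) (tr m a v)" if u: "u \<in> vecs m" and v: "v \<in> vecs m" for u v
  proof -
    have b: "bf a (vadd u v) = (bf a u \<noteq> bf a v)" using u v vecs_finite by (intro bf_add2) auto
    have uv: "vadd u v \<in> vecs m" using u v by (rule vecs_vadd)
    have i1: "vadd a (vadd u v) = vadd (vadd a u) v" "vadd a (vadd u v) = vadd u (vadd a v)"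
      "vadd u v = vadd (vadd a u) (vadd a v)" unfolding vadd_def by auto
    show ?thesis
    proof (cases "bf a u"; cases "bf a v")
      assume h: "bf a u" "bf a v"
      thus ?thesis unfolding tr_def using u v uv b i1(3) by simp
    next
      assume h: "bf a u" "\<not> bf a v"
      thus ?thesis unfolding tr_def using u v uv b i1(1) by simp
    next
      assume h: "\<not> bf a u" "bf a v"
      thus ?thesis unfolding tr_def using u v uv b i1(2) by simp
    next
      assume h: "\<not> bf a u" "\<not> bf a v"
      thus ?thesis unfolding tr_def using u v uv b by simp
    qed
  qed
  have 4: "symp m (tr m a u) (tr m a v) = symp m u v" if u: "u \<in> vecs m" and v: "v \<in> vecs m" for u v
  proof -
    have fa: "finite a" "finite u" "finite v" using a u v vecs_finite by auto
    have e: "symp m (tr m a u) (tr m a v) = bf (tr m a u) (tr m a v)" using tr_vec[OF a u] symp_bf by blast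
    have bau: "bf u a = bf a u" "bf v a = bf a v" using bf_sym by auto
    have fau: "finite (vadd a u)" using a u vecs_vadd vecs_finite by blast
    have "bf (tr m a u) (tr m a v) = bf u v"
    proof (cases "bf a u"; cases "bf a v")
      assume h: "bf a u" "bf a v"
      have "bf (vadd a u) (vadd a v) = (bf (vadd a u) a \<noteq> bf (vadd a u) v)"
        by (rule bf_add2[OF fa(1) fa(3)])
      also have "\<dots> = ((bf a a \<noteq> bf u a) \<noteq> (bf a v \<noteq> bf u v))"
        using fa by (simp add: bf_add1)
      also have "\<dots> = bf u v" using h bau by simp
      finally show ?thesis unfolding tr_def using u v h by simp
    next
      assume h: "bf a u" "\<not> bf a v"
      have "bf (vadd a u) v = (bf a v \<noteq> bf u v)" using fa by (simp add: bf_add1)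
      thus ?thesis unfolding tr_def using u v h by simp
    next
      assume h: "\<not> bf a u" "bf a v"
      have "bf u (vadd a v) = (bf u a \<noteq> bf u v)" using fa by (simp add: bf_add2)
      thus ?thesis unfolding tr_def using u v h bau by simp
    next
      assume h: "\<not> bf a u" "\<not> bf a v"
      thus ?thesis unfolding tr_def by simp
    qed
    thus ?thesis using e symp_bf[OF u] by simp
  qed
  show ?thesis unfolding Sp_def mem_Collect_eq using 1 2 3 4 by (intro conjI ballI) auto
qed

lemma vadd_eq_empty: "vadd x y = {} \<Longrightarrow> x = y" unfolding vadd_def by blast

theorem lemma3p7:
  fixes m :: nat and eps :: bool and \<omega> \<omega>' :: "nat set \<Rightarrow> bool"
  assumes "m \<ge> 3"
    and "\<omega> \<in> qforms_type m eps" and "\<omega>' \<in> qforms_type m eps" and "\<omega> \<noteq> \<omega>'"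
  shows "(\<exists>s\<in>Sp m. s \<circ> s = id \<and> qact s \<omega> = \<omega>' \<and> qact s \<omega>' = \<omega>
            \<and> (\<forall>h\<in>Sp m. qact h \<omega> = \<omega> \<and> qact h \<omega>' = \<omega>' \<longrightarrow> h \<circ> s = s \<circ> h)
            \<and> {g\<in>Sp m. qact g ` {\<omega>, \<omega>'} = {\<omega>, \<omega>'}}
              = {h\<in>Sp m. qact h \<omega> = \<omega> \<and> qact h \<omega>' = \<omega>'}
                \<union> {s \<circ> h | h. h \<in> Sp m \<and> qact h \<omega> = \<omega> \<and> qact h \<omega>' = \<omega>'})
         \<and> \<not> (\<exists>(act :: (nat set \<Rightarrow> nat set) \<Rightarrow> 'b \<Rightarrow> 'b) \<Omega> \<pi>.
                proper_2bbt_extension (Sp m) qact (qforms_type m eps) act \<Omega> \<pi>)"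
proof -
  have om: "\<omega> \<in> qforms m" "plus_type m \<omega> = eps" using assms(2) unfolding qforms_type_def by auto
  have om': "\<omega>' \<in> qforms m" "plus_type m \<omega>' = eps" using assms(3) unfolding qforms_type_def by auto
  obtain a where a: "a \<in> vecs m" "\<forall>v\<in>vecs m. \<omega>' v = (\<omega> v \<noteq> bf a v)"
    using functional[OF om(1) om'(1)] by blast
  have na: "\<not> \<omega> a" using type_zero[OF om(1) om'(1) a(1) a(2)] om(2) om'(2) by simp
  define s where "s = tr m a"
  have sSp: "s \<in> Sp m" unfolding s_def by (rule tr_Sp[OF a(1)])
  have sinv: "s \<circ> s = id" unfolding s_def by (rule tr_invol[OF a(1)])
  have sbij: "bij s" by (rule sp_bij[OF sSp])
  have outw: "\<And>v. v \<notin> vecs m \<Longrightarrow> \<omega> v = False" using om(1) unfolding qforms_def by auto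
  have outw': "\<And>v. v \<notin> vecs m \<Longrightarrow> \<omega>' v = False" using om'(1) unfolding qforms_def by auto
  have qs: "qact s \<omega> = \<omega>'"
  proof -
    have "\<omega> (s v) = \<omega>' v" for v
    proof (cases "v \<in> vecs m")
      case True
      show ?thesis
      proof (cases "bf a v")
        case b: True
        have "\<omega> (vadd a v) = ((\<omega> a \<noteq> \<omega> v) \<noteq> bf a v)" by (rule qform_add[OF om(1) a(1) True])
        thus ?thesis unfolding s_def tr_def using True b a(2) na by auto
      next
        case False
        thus ?thesis unfolding s_def tr_def using True a(2) by auto
      qed
    next
      case False
      thus ?thesis unfolding s_def tr_def using outw outw' by auto
    qed
    thus ?thesis unfolding qact_invol[OF sinv] by auto
  qed
  have qs': "qact s \<omega>' = \<omega>"
    using qact_comp[OF sbij sbij, of \<omega>] qs sinv qact_id by metis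
  have comm: "h \<circ> s = s \<circ> h" if h: "h \<in> Sp m" "qact h \<omega> = \<omega>" "qact h \<omega>' = \<omega>'" for h
  proof -
    have hb: "bij h" by (rule sp_bij[OF h(1)])
    have f1: "\<And>v. \<omega> (h v) = \<omega> v" using qact_fix[OF hb h(2)] .
    have f2: "\<And>v. \<omega>' (h v) = \<omega>' v" using qact_fix[OF hb h(3)] .
    have ba: "bf a (h v) = bf a v" if v: "v \<in> vecs m" for v
      using a(2) v sp_vec[OF h(1) v] f1[of v] f2[of v] by auto
    have hav: "h a \<in> vecs m" by (rule sp_vec[OF h(1) a(1)])
    have "\<forall>x\<in>vecs m. \<not> bf (vadd (h a) a) x"
    proof
      fix x assume x: "x \<in> vecs m"
      then obtain v where v: "v \<in> vecs m" "x = h v" using sp_surj[OF h(1)] by blast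
      have "bf (vadd (h a) a) (h v) = (bf (h a) (h v) \<noteq> bf a (h v))"
        using hav a(1) vecs_finite by (intro bf_add1) auto
      also have "\<dots> = False" using sp_symp[OF h(1) a(1) v(1)] ba[OF v(1)] by simp
      finally show "\<not> bf (vadd (h a) a) x" using v by simp
    qed
    hence "vadd (h a) a = {}" using nondeg vecs_vadd[OF hav a(1)] by blast
    hence ha: "h a = a" by (rule vadd_eq_empty)
    show ?thesis
    proof
      fix v
      show "(h \<circ> s) v = (s \<circ> h) v"
      proof (cases "v \<in> vecs m")
        case True
        have hv: "h v \<in> vecs m" by (rule sp_vec[OF h(1) True])
        show ?thesis
        proof (cases "bf a v")
          case b: True
          have "h (vadd a v) = vadd (h a) (h v)" by (rule sp_add[OF h(1) a(1) True])
          thus ?thesis unfolding s_def tr_def using True b hv ba[OF True] ha by simp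
        next
          case False
          thus ?thesis unfolding s_def tr_def using True hv ba[OF True] by simp
        qed
      next
        case False
        thus ?thesis unfolding s_def tr_def using sp_out[OF h(1) False] by simp
      qed
    qed
  qed
  have sp_qcomp: "\<And>f g Q. f \<in> Sp m \<Longrightarrow> g \<in> Sp m \<Longrightarrow> qact (f \<circ> g) Q = qact f (qact g Q)"
    using qact_comp sp_bij by blast
  have seteq: "{g\<in>Sp m. qact g ` {\<omega>, \<omega>'} = {\<omega>, \<omega>'}}
              = {h\<in>Sp m. qact h \<omega> = \<omega> \<and> qact h \<omega>' = \<omega>'}
                \<union> {s \<circ> h | h. h \<in> Sp m \<and> qact h \<omega> = \<omega> \<and> qact h \<omega>' = \<omega>'}"
  proof
    show "{g\<in>Sp m. qact g ` {\<omega>, \<omega>'} = {\<omega>, \<omega>'}} \<subseteq> {h\<in>Sp m. qact h \<omega> = \<omega> \<and> qact h \<omega>' = \<omega>'}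
                \<union> {s \<circ> h | h. h \<in> Sp m \<and> qact h \<omega> = \<omega> \<and> qact h \<omega>' = \<omega>'}"
    proof
      fix g assume "g \<in> {g\<in>Sp m. qact g ` {\<omega>, \<omega>'} = {\<omega>, \<omega>'}}"
      hence g: "g \<in> Sp m" "{qact g \<omega>, qact g \<omega>'} = {\<omega>, \<omega>'}" by auto
      hence "(qact g \<omega> = \<omega> \<and> qact g \<omega>' = \<omega>') \<or> (qact g \<omega> = \<omega>' \<and> qact g \<omega>' = \<omega>)"
        by (simp add: doubleton_eq_iff)
      thus "g \<in> {h\<in>Sp m. qact h \<omega> = \<omega> \<and> qact h \<omega>' = \<omega>'}
                \<union> {s \<circ> h | h. h \<in> Sp m \<and> qact h \<omega> = \<omega> \<and> qact h \<omega>' = \<omega>'}"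
      proof
        assume "qact g \<omega> = \<omega> \<and> qact g \<omega>' = \<omega>'"
        thus ?thesis using g by auto
      next
        assume sw: "qact g \<omega> = \<omega>' \<and> qact g \<omega>' = \<omega>"
        have hS: "s \<circ> g \<in> Sp m" by (rule sp_comp[OF sSp g(1)])
        have "qact (s \<circ> g) \<omega> = \<omega>" "qact (s \<circ> g) \<omega>' = \<omega>'"
          using sp_qcomp[OF sSp g(1)] sw qs qs' by auto
        moreover have "g = s \<circ> (s \<circ> g)" by (simp add: o_assoc sinv)
        ultimately show ?thesis using hS by blast
      qed
    qed
  next
    show "{h\<in>Sp m. qact h \<omega> = \<omega> \<and> qact h \<omega>' = \<omega>'}
                \<union> {s \<circ> h | h. h \<in> Sp m \<and> qact h \<omega> = \<omega> \<and> qact h \<omega>' = \<omega>'}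
          \<subseteq> {g\<in>Sp m. qact g ` {\<omega>, \<omega>'} = {\<omega>, \<omega>'}}"
    proof
      fix g assume "g \<in> {h\<in>Sp m. qact h \<omega> = \<omega> \<and> qact h \<omega>' = \<omega>'}
                \<union> {s \<circ> h | h. h \<in> Sp m \<and> qact h \<omega> = \<omega> \<and> qact h \<omega>' = \<omega>'}"
      thus "g \<in> {g\<in>Sp m. qact g ` {\<omega>, \<omega>'} = {\<omega>, \<omega>'}}"
      proof
        assume "g \<in> {h\<in>Sp m. qact h \<omega> = \<omega> \<and> qact h \<omega>' = \<omega>'}"
        thus ?thesis by auto
      next
        assume "g \<in> {s \<circ> h | h. h \<in> Sp m \<and> qact h \<omega> = \<omega> \<and> qact h \<omega>' = \<omega>'}"
        then obtain h where h: "g = s \<circ> h" "h \<in> Sp m" "qact h \<omega> = \<omega>" "qact h \<omega>' = \<omega>'" by blast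
        have "g \<in> Sp m" using h sp_comp[OF sSp h(2)] by simp
        moreover have "qact g \<omega> = \<omega>'" "qact g \<omega>' = \<omega>"
          using h sp_qcomp[OF sSp h(2)] qs qs' by auto
        ultimately show ?thesis by auto
      qed
    qed
  qed
  have part1: "\<exists>s\<in>Sp m. s \<circ> s = id \<and> qact s \<omega> = \<omega>' \<and> qact s \<omega>' = \<omega>
            \<and> (\<forall>h\<in>Sp m. qact h \<omega> = \<omega> \<and> qact h \<omega>' = \<omega>' \<longrightarrow> h \<circ> s = s \<circ> h)
            \<and> {g\<in>Sp m. qact g ` {\<omega>, \<omega>'} = {\<omega>, \<omega>'}}
              = {h\<in>Sp m. qact h \<omega> = \<omega> \<and> qact h \<omega>' = \<omega>'}
                \<union> {s \<circ> h | h. h \<in> Sp m \<and> qact h \<omega> = \<omega> \<and> qact h \<omega>' = \<omega>'}"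
    using sSp sinv qs qs' comm seteq by blast
  have part2: "\<not> (\<exists>(act :: (nat set \<Rightarrow> nat set) \<Rightarrow> 'b \<Rightarrow> 'b) \<Omega> \<pi>.
                proper_2bbt_extension (Sp m) qact (qforms_type m eps) act \<Omega> \<pi>)"
  proof
    assume "\<exists>(act :: (nat set \<Rightarrow> nat set) \<Rightarrow> 'b \<Rightarrow> 'b) \<Omega> \<pi>.
                proper_2bbt_extension (Sp m) qact (qforms_type m eps) act \<Omega> \<pi>"
    then obtain act :: "(nat set \<Rightarrow> nat set) \<Rightarrow> 'b \<Rightarrow> 'b" and \<Omega> \<pi> where
      P: "proper_2bbt_extension (Sp m) qact (qforms_type m eps) act \<Omega> \<pi>" by blast
    have P1: "\<And>g w. g \<in> Sp m \<Longrightarrow> w \<in> \<Omega> \<Longrightarrow> act g w \<in> \<Omega>"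
      and P2: "\<And>w. w \<in> \<Omega> \<Longrightarrow> act id w = w"
      and P3: "\<And>g h w. g \<in> Sp m \<Longrightarrow> h \<in> Sp m \<Longrightarrow> w \<in> \<Omega> \<Longrightarrow> act (g \<circ> h) w = act g (act h w)"
      and P5: "\<And>g w. g \<in> Sp m \<Longrightarrow> w \<in> \<Omega> \<Longrightarrow> \<pi> (act g w) = qact g (\<pi> w)"
      and P6: "\<forall>x\<in>qforms_type m eps. \<exists>a\<in>\<Omega>. \<exists>b\<in>\<Omega>. a \<noteq> b \<and> \<pi> a = x \<and> \<pi> b = x"
      and P7: "\<And>a b c d. a \<in> \<Omega> \<Longrightarrow> b \<in> \<Omega> \<Longrightarrow> c \<in> \<Omega> \<Longrightarrow> d \<in> \<Omega> \<Longrightarrow> \<pi> a \<noteq> \<pi> b \<Longrightarrow> \<pi> c \<noteq> \<pi> d \<Longrightarrow>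
        (\<exists>g\<in>Sp m. act g a = c \<and> act g b = d)"
      using P unfolding proper_2bbt_extension_def by blast+
    obtain a1 a2 where a12: "a1 \<in> \<Omega>" "a2 \<in> \<Omega>" "a1 \<noteq> a2" "\<pi> a1 = \<omega>" "\<pi> a2 = \<omega>"
      using P6 assms(2) by blast
    define b where "b = act s a1"
    define c where "c = act s a2"
    have bO: "b \<in> \<Omega>" "c \<in> \<Omega>" unfolding b_def c_def using P1 sSp a12 by auto
    have pb: "\<pi> b = \<omega>'" "\<pi> c = \<omega>'" unfolding b_def c_def using P5[OF sSp] a12 qs by auto
    obtain g where g: "g \<in> Sp m" "act g a1 = a1" "act g b = c"
      using P7[OF a12(1) bO(1) a12(1) bO(2)] a12(4) pb assms(4) by auto
    have "qact g \<omega> = \<omega>" using P5[OF g(1) a12(1)] g(2) a12(4) by simp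
    moreover have "qact g \<omega>' = \<omega>'" using P5[OF g(1) bO(1)] g(3) pb by simp
    ultimately have gs: "g \<circ> s = s \<circ> g" using comm g(1) by blast
    have "act g b = act (g \<circ> s) a1" unfolding b_def using P3[OF g(1) sSp a12(1)] by simp
    also have "\<dots> = act s (act g a1)" unfolding gs using P3[OF sSp g(1) a12(1)] by simp
    also have "\<dots> = b" unfolding b_def g(2) ..
    finally have "c = b" using g(3) by simp
    hence "act s c = act s b" by simp
    moreover have "act s c = a2" unfolding c_def using P3[OF sSp sSp a12(2)] sinv P2[OF a12(2)] by simp
    moreover have "act s b = a1" unfolding b_def using P3[OF sSp sSp a12(1)] sinv P2[OF a12(1)] by simp
    ultimately show False using a12(3) by simp
  qed
  show ?thesis using part1 part2 by blast
qed

end
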